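(* Let $q=2^m$ and $\mu_{q+1}=\{\delta\in\mathbb{F}_{q^2}:\delta^{q+1}=1\}$. The map $x\mapsto \dfrac{x^q}{1+x^{1+q}}$ is exactly 2-to-1 on $\mathbb{F}_{q^2}^{*}\setminus\mu_{q+1}$: for $s,t\in\mathbb{F}_{q^2}^{*}\setminus\mu_{q+1}$ one has $\frac{s^q}{1+s^{1+q}}=\frac{t^q}{1+t^{1+q}}$ if and only if $t=s$ or $t=s^{-q}$, and these two values are distinct. *)

theory Defs
  imports Main
begin

definition mu :: "nat \<Rightarrow> 'a::field set" where
  "mu n = {d. d ^ n = 1}"

end

theory Submission
  imports Defs
begin

lemma inv_even:
  assumes "finite S" "\<forall>x\<in>S. g x \<in> S \<and> g x \<noteq> x \<and> g (g x) = x"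
  shows "even (card S)"
  using assms
proof (induction "card S" arbitrary: S rule: less_induct)
  case less
  show ?case
  proof (cases "S = {}")
    case True then show ?thesis by simp
  next
    case False
    then obtain x where x: "x \<in> S" by blast
    define S' where "S' = S - {x, g x}"
    have gx: "g x \<in> S" "g x \<noteq> x" using less.prems x by auto
    have c: "card S = card S' + 2"
    proof -
      have "card {x, g x} \<le> card S" using less.prems(1) x gx by (intro card_mono) auto
      then show ?thesis
        unfolding S'_def using less.prems(1) x gx
        by (simp add: card_Diff_subset)
    qed
    have cl: "\<forall>y\<in>S'. g y \<in> S' \<and> g y \<noteq> y \<and> g (g y) = y"
    proof
      fix y assume y: "y \<in> S'"
      then have yS: "y \<in> S" "y \<noteq> x" "y \<noteq> g x" by (auto simp: S'_def)
      have P: "g y \<in> S" "g y \<noteq> y" "g (g y) = y" using less.prems(2) yS(1) by auto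
      have Px: "g (g x) = x" using less.prems(2) x by auto
      have "g y \<noteq> x" using P(3) yS(3) by auto
      moreover have "g y \<noteq> g x" using P(3) Px yS(2) by metis
      ultimately show "g y \<in> S' \<and> g y \<noteq> y \<and> g (g y) = y" using P by (simp add: S'_def)
    qed
    have "even (card S')"
      using less.hyps[of S'] c less.prems(1) cl unfolding S'_def by auto
    then show ?thesis using c by simp
  qed
qed

lemma char2:
  assumes "card (UNIV :: 'a::{field,finite} set) = ((2::nat) ^ m) ^ 2"
  shows "(1::'a) + 1 = 0"
proof (rule ccontr)
  assume h: "(1::'a) + 1 \<noteq> 0"
  define S where "S = (UNIV :: 'a set) - {0}"
  have "\<forall>x\<in>S. - x \<in> S \<and> - x \<noteq> x \<and> - (- x) = x"
  proof
    fix x assume "x \<in> S"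
    then have x0: "x \<noteq> 0" by (simp add: S_def)
    have "(1 + 1) * x \<noteq> 0" using h x0 by simp
    then have "-x \<noteq> x" by (metis distrib_right mult_1 neg_eq_iff_add_eq_0)
    then show "- x \<in> S \<and> - x \<noteq> x \<and> - (- x) = x" using x0 by (simp add: S_def)
  qed
  then have e: "even (card S)" using inv_even[of S uminus] by (simp add: S_def)
  have cU: "card (UNIV :: 'a set) = card S + 1"
    unfolding S_def using finite_UNIV_card_ge_0[where 'a='a]
    by (simp add: card_Diff_singleton)
  have "card {0::'a, 1} \<le> card (UNIV :: 'a set)" by (rule card_mono) auto
  then have "card (UNIV :: 'a set) \<ge> 2" by simp
  then have "m \<noteq> 0" using assms by (cases m) auto
  then have "even (card (UNIV :: 'a set))" using assms by simp
  then show False using e cU by simp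
qed

lemma fermat:
  fixes x :: "'a::{field,finite}"
  shows "x ^ card (UNIV :: 'a set) = x"
proof (cases "x = 0")
  case True
  have "card (UNIV :: 'a set) > 0" by (rule finite_UNIV_card_ge_0) simp
  then show ?thesis using True by simp
next
  case False
  define S where "S = (UNIV :: 'a set) - {0}"
  have inj: "inj_on ((*) x) S" using False by (auto simp: inj_on_def)
  have im: "(*) x ` S = S"
  proof
    show "(*) x ` S \<subseteq> S" using False by (auto simp: S_def)
    show "S \<subseteq> (*) x ` S"
    proof
      fix y assume "y \<in> S"
      then have "y = x * (y / x)" "y / x \<in> S" using False by (auto simp: S_def)
      then show "y \<in> (*) x ` S" by blast
    qed
  qed
  have "prod (\<lambda>y. y) S = prod (\<lambda>y. y) ((*) x ` S)" using im by simp
  also have "\<dots> = prod (\<lambda>y. x * y) S" using prod.reindex[OF inj, of "\<lambda>y. y"] by simp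
  also have "\<dots> = x ^ card S * prod (\<lambda>y. y) S" by (simp add: prod.distrib)
  finally have eq: "prod (\<lambda>y. y) S = x ^ card S * prod (\<lambda>y. y) S" .
  have "prod (\<lambda>y. y) S \<noteq> 0" by (simp add: S_def)
  then have "x ^ card S = 1" using eq by simp
  moreover have "card (UNIV :: 'a set) = card S + 1"
    unfolding S_def using finite_UNIV_card_ge_0[where 'a='a]
    by (simp add: card_Diff_singleton)
  ultimately show ?thesis by simp
qed

lemma frob_add:
  fixes x y :: "'a::field"
  assumes "(1::'a) + 1 = 0"
  shows "(x + y) ^ (2 ^ n) = x ^ (2 ^ n) + y ^ (2 ^ n)"
proof (induction n)
  case 0 then show ?case by simp
next
  case (Suc n)
  have sq: "(a + b) ^ 2 = a ^ 2 + b ^ 2" for a b :: 'a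
  proof -
    have "(a + b) ^ 2 = a ^ 2 + b ^ 2 + (1 + 1) * (a * b)"
      by (simp add: power2_eq_square algebra_simps)
    then show ?thesis using assms by simp
  qed
  have "(x + y) ^ (2 ^ Suc n) = ((x + y) ^ (2 ^ n)) ^ 2"
    by (simp add: power_mult[symmetric] mult.commute)
  also have "\<dots> = (x ^ (2 ^ n)) ^ 2 + (y ^ (2 ^ n)) ^ 2" using Suc sq by simp
  also have "\<dots> = x ^ (2 ^ Suc n) + y ^ (2 ^ Suc n)"
    by (simp add: power_mult[symmetric] mult.commute)
  finally show ?case .
qed

theorem mainTheorem7:
  fixes m :: nat and q :: nat and s t :: "'a::{field,finite}"
  assumes "q = 2 ^ m"
    and "card (UNIV :: 'a set) = q ^ 2"
    and "s \<noteq> 0" and "s \<notin> mu (q + 1)"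
    and "t \<noteq> 0" and "t \<notin> mu (q + 1)"
  shows "(s ^ q / (1 + s ^ (1 + q)) = t ^ q / (1 + t ^ (1 + q))
           \<longleftrightarrow> (t = s \<or> t = inverse (s ^ q)))
         \<and> s \<noteq> inverse (s ^ q)"
proof -
  have c2: "(1::'a) + 1 = 0" using char2[of m] assms(1,2) by (simp add: power_mult[symmetric] mult.commute)
  have neg: "- (z::'a) = z" for z
    by (metis c2 add.inverse_unique distrib_right mult_1 mult_zero_left)
  define cj :: "'a \<Rightarrow> 'a" where "cj z = z ^ q" for z
  have cadd: "cj (a + b) = cj a + cj b" for a b
    unfolding cj_def using frob_add[OF c2] assms(1) by simp
  have cdiff: "cj (a - b) = cj a - cj b" for a b
    using cadd[of a b] neg by (metis diff_conv_add_uminus)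
  have cmul: "cj (a * b) = cj a * cj b" for a b unfolding cj_def by (simp add: power_mult_distrib)
  have cinv: "cj (inverse a) = inverse (cj a)" for a unfolding cj_def by (simp add: power_inverse)
  have cc: "cj (cj a) = a" for a
    unfolding cj_def using fermat[of a] assms(2) by (simp add: power_mult[symmetric] power2_eq_square)
  have c0: "cj a \<noteq> 0" if "a \<noteq> 0" for a using that unfolding cj_def by simp
  have mu_iff: "z \<in> mu (q+1) \<longleftrightarrow> z * cj z = 1" for z
    unfolding mu_def cj_def by (simp add: mult.commute)
  have onep: "1 + a \<noteq> 0" if "a \<noteq> 1" for a :: 'a
    using that neg by (metis add.commute add_diff_cancel_right' diff_0 diff_eq_eq)
  have sp: "s ^ (1 + q) = s * cj s" "t ^ (1 + q) = t * cj t" unfolding cj_def by simp_all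
  have As: "s * cj s \<noteq> 1" using assms(4) mu_iff by simp
  have At: "t * cj t \<noteq> 1" using assms(6) mu_iff by simp
  have ds: "1 + s * cj s \<noteq> 0" using onep[OF As] .
  have dt: "1 + t * cj t \<noteq> 0" using onep[OF At] .
  have cs0: "cj s \<noteq> 0" "cj t \<noteq> 0" using c0 assms(3,5) by auto
  have distinct: "s \<noteq> inverse (cj s)"
  proof
    assume "s = inverse (cj s)"
    then have "s * cj s = inverse (cj s) * cj s" by simp
    then have "s * cj s = 1" using cs0 by simp
    then show False using As by simp
  qed
  have eqv: "cj s / (1 + s * cj s) = cj t / (1 + t * cj t) \<longleftrightarrow> (t = s \<or> t = inverse (cj s))"
  proof
    assume e: "cj s / (1 + s * cj s) = cj t / (1 + t * cj t)"
    then have e1: "cj s * (1 + t * cj t) = cj t * (1 + s * cj s)"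
      using ds dt by (simp add: field_simps)
    have e2: "cj s - cj t = cj s * cj t * (s - t)" using e1 by (simp add: algebra_simps)
    have e3: "s - t = s * t * (cj s - cj t)"
      using arg_cong[OF e2, of cj] by (simp add: cdiff cmul cc)
    have e4: "s - t = s * t * cj s * cj t * (s - t)" using e3 e2 by (simp add: algebra_simps)
    show "t = s \<or> t = inverse (cj s)"
    proof (cases "t = s")
      case True then show ?thesis by simp
    next
      case False
      then have "s - t \<noteq> 0" by simp
      have "(s - t) * 1 = (s - t) * (s * cj s * (t * cj t))" using e4 by (simp add: ac_simps)
      then have P: "s * cj s * (t * cj t) = 1" using \<open>s - t \<noteq> 0\<close>
        by (metis mult_left_cancel)
      define A where "A = s * cj s"
      have A0: "A \<noteq> 0" using assms(3) cs0 by (simp add: A_def)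
      have tt: "t * cj t = inverse A" using P A0 by (simp add: A_def field_simps)
      have "cj s - cj t = A * cj t - cj s * inverse A"
        using e2 tt by (simp add: A_def algebra_simps)
      then have "cj s * (1 + inverse A) = cj t * (1 + A)" using neg
        by (simp add: algebra_simps)
      then have "cj s * (A + 1) = cj t * (1 + A) * A" using A0 by (simp add: field_simps)
      moreover have "1 + A \<noteq> 0" using ds by (simp add: A_def)
      ultimately have "cj s * (A + 1) = (A * cj t) * (A + 1)" "A + 1 \<noteq> 0"
        by (simp_all add: ac_simps)
      then have "cj s = A * cj t" by (metis mult_right_cancel)
      then have "cj t = cj s / A" using A0 by (simp add: field_simps)
      then have "cj t = inverse s" using cs0 assms(3) by (simp add: A_def field_simps)
      then have "t = cj (inverse s)" using cc by metis
      then show ?thesis by (simp add: cinv)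
    qed
  next
    assume "t = s \<or> t = inverse (cj s)"
    then show "cj s / (1 + s * cj s) = cj t / (1 + t * cj t)"
    proof
      assume "t = s" then show ?thesis by simp
    next
      assume T: "t = inverse (cj s)"
      have "cj t = inverse s" using T by (simp add: cinv cc)
      define A where "A = s * cj s"
      have A0: "A \<noteq> 0" using assms(3) cs0 by (simp add: A_def)
      have A1: "1 + A \<noteq> 0" using ds by (simp add: A_def)
      have tt: "t * cj t = inverse A" using T \<open>cj t = inverse s\<close>
        by (simp add: A_def mult.commute)
      have "cj t / (1 + t * cj t) = inverse s / (1 + inverse A)"
        using tt \<open>cj t = inverse s\<close> by simp
      also have "\<dots> = A / (s * (1 + A))" using A0 A1 assms(3)
        by (simp add: field_simps)
      also have "\<dots> = cj s / (1 + A)" using assms(3) by (simp add: A_def)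
      finally show ?thesis by (simp add: A_def)
    qed
  qed
  show ?thesis using eqv distinct sp unfolding cj_def by simp
qed

end
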